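(* Let $\mathcal{X},\mathcal{Y}$ be finite-dimensional real Hilbert spaces, $\mathcal{A}:\mathcal{X}\to\mathcal{Y}$ linear, $\mathcal{R}:\mathcal{X}\to\mathbb{R}$ $\rho$-weakly convex, and $F:\mathcal{Y}\to\mathbb{R}\cup\{+\infty\}$ proper, convex and lower semicontinuous with convex conjugate $F^*$ being $\mu$-strongly convex. Let $(z^k)=(x^k,y^k)$ be generated by the PDHGM iteration with $\vartheta=1$ and step sizes $\tau,\sigma>0$ satisfying $\tau\sigma\|\mathcal{A}\|^2<1$, $\tau\rho<1$ and $\mu\sigma>3$. Then for every $k\ge1$, \[ \mathcal{L}(z^{k},z^{k-1})-\mathcal{L}(z^{k+1},z^{k})\geqslant \frac{1}{2}(\mu\sigma-3)\|y^{k}-y^{k+1}\|_{M}^2 +\frac{1}{2}(1-\rho\tau)\|x^{k}-x^{k+1}\|_{M}^2 . \]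
   Context: $f$ is $\rho$-weakly convex ($\rho\ge0$) if $f+\frac{\rho}{2}\|\cdot\|^2$ is convex, and $\mu$-strongly convex ($\mu>0$) if $f-\frac{\mu}{2}\|\cdot\|^2$ is convex. $F^*(y)=\sup_{w\in\mathcal{Y}}\{\langle y,w\rangle-F(w)\}$. $\mathcal{A}^*$ is the adjoint and $\|\mathcal{A}\|$ the operator norm. The saddle function is $L(x,y)=\mathcal{R}(x)+\langle\mathcal{A}x,y\rangle_{\mathcal{Y}}-F^*(y)$. PDHGM with $\vartheta=1$: from $z^0=(x^0,y^0)$, $x^{k+1}=\operatorname{argmin}_x\{\mathcal{R}(x)+\langle y^k,\mathcal{A}x\rangle+\frac{1}{2\tau}\|x-x^k\|^2\}$, $x_\vartheta^{k+1}=x^{k+1}+(x^{k+1}-x^k)$, $y^{k+1}=\operatorname{argmin}_y\{F^*(y)-\langle y,\mathcal{A}x_\vartheta^{k+1}\rangle+\frac{1}{2\sigma}\|y-y^k\|^2\}$. For $z=(x,y)$, $\|z\|_M^2=\frac1\tau\|x\|^2-2\langle\mathcal{A}x,y\rangle+\frac1\sigma\|y\|^2$ (i.e. $\langle z,Mz\rangle$ with $M=\begin{pmatrix}\frac1\tau I&-\mathcal{A}^*\\-\mathcal{A}&\frac1\sigma I\end{pmatrix}$); for $x\in\mathcal{X}$, $\|x\|_M=\|x\|/\sqrt\tau$, and for $y\in\mathcal{Y}$, $\|y\|_M=\|y\|/\sqrt\sigma$. The Lyapunov function is $\mathcal{L}(z,z')=L(z)+\frac12\|z'-z\|_M^2$.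 *)

theory Defs
  imports "HOL-Analysis.Analysis"
begin

definition ext_convex :: "('b::real_vector \<Rightarrow> ereal) \<Rightarrow> bool" where
  "ext_convex f \<longleftrightarrow> (\<forall>u v t. 0 < t \<and> t < 1 \<longrightarrow>
      f ((1 - t) *\<^sub>R u + t *\<^sub>R v) \<le> ereal (1 - t) * f u + ereal t * f v)"

definition ext_proper :: "('b \<Rightarrow> ereal) \<Rightarrow> bool" where
  "ext_proper f \<longleftrightarrow> (\<forall>u. f u \<noteq> -\<infinity>) \<and> (\<exists>u. f u \<noteq> \<infinity>)"

definition ext_lsc :: "('b::topological_space \<Rightarrow> ereal) \<Rightarrow> bool" where
  "ext_lsc f \<longleftrightarrow> (\<forall>c::real. closed {u. f u \<le> ereal c})"

definition conj_fun :: "('b::real_inner \<Rightarrow> ereal) \<Rightarrow> 'b \<Rightarrow> ereal" where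
  "conj_fun F y = (SUP w. ereal (y \<bullet> w) - F w)"

definition weakly_convex :: "real \<Rightarrow> ('a::real_normed_vector \<Rightarrow> real) \<Rightarrow> bool" where
  "weakly_convex \<rho> f \<longleftrightarrow> convex_on UNIV (\<lambda>x. f x + \<rho> / 2 * (norm x)\<^sup>2)"

definition strongly_convex_ext :: "real \<Rightarrow> ('b::real_normed_vector \<Rightarrow> ereal) \<Rightarrow> bool" where
  "strongly_convex_ext \<mu> f \<longleftrightarrow> ext_convex (\<lambda>u. f u - ereal (\<mu> / 2 * (norm u)\<^sup>2))"

definition saddleL :: "('a \<Rightarrow> real) \<Rightarrow> ('a \<Rightarrow> 'b::real_inner) \<Rightarrow> ('b \<Rightarrow> ereal) \<Rightarrow> 'a \<Rightarrow> 'b \<Rightarrow> ereal" where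
  "saddleL R A F x y = ereal (R x + A x \<bullet> y) - conj_fun F y"

definition Mnorm_sq :: "real \<Rightarrow> real \<Rightarrow> ('a::real_normed_vector \<Rightarrow> 'b::real_inner) \<Rightarrow> 'a \<Rightarrow> 'b \<Rightarrow> real" where
  "Mnorm_sq \<tau> \<sigma> A x y = (1/\<tau>) * (norm x)\<^sup>2 - 2 * (A x \<bullet> y) + (1/\<sigma>) * (norm y)\<^sup>2"

definition lyap :: "('a::real_normed_vector \<Rightarrow> real) \<Rightarrow> ('a \<Rightarrow> 'b::real_inner) \<Rightarrow> ('b \<Rightarrow> ereal)
    \<Rightarrow> real \<Rightarrow> real \<Rightarrow> 'a \<Rightarrow> 'b \<Rightarrow> 'a \<Rightarrow> 'b \<Rightarrow> ereal" where
  "lyap R A F \<tau> \<sigma> x y x' y' = saddleL R A F x y + ereal (1/2 * Mnorm_sq \<tau> \<sigma> A (x' - x) (y' - y))"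

end

theory Submission
  imports Defs
begin


lemma sq_comb:
  fixes u v :: "'a::real_inner"
  shows "(norm ((1-t) *\<^sub>R u + t *\<^sub>R v))\<^sup>2 = (1-t)*(norm u)\<^sup>2 + t*(norm v)\<^sup>2 - t*(1-t)*(norm (u-v))\<^sup>2"
  by (simp add: power2_norm_eq_inner inner_add_left inner_add_right inner_diff_left inner_diff_right inner_commute algebra_simps)

lemma lim_aux:
  fixes X Y K :: real
  assumes K: "K \<ge> 0" and h: "\<And>t. 0<t \<Longrightarrow> t<1 \<Longrightarrow> X \<le> Y - K*(1-t)"
  shows "X \<le> Y - K"
proof (rule ccontr)
  assume na: "\<not> X \<le> Y - K"
  define d where "d = X + K - Y"
  have d: "d > 0" using na d_def by simp
  have Kp: "K > 0" using h[of "1/2"] d d_def by simp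
  define t where "t = min (1/2) (d/(2*K))"
  have t0: "0 < t" "t < 1" using d Kp by (auto simp: t_def)
  have "t \<le> d/(2*K)" by (simp add: t_def)
  then have "K*t \<le> K*(d/(2*K))" using Kp by (intro mult_left_mono) auto
  also have "K*(d/(2*K)) = d/2" using Kp by simp
  finally have "K*t \<le> d/2" .
  then show False using h[OF t0] d_def d by (simp add: algebra_simps)
qed



lemma prox_gen:
  fixes \<Phi> :: "'a::real_inner \<Rightarrow> real"
  assumes m: "m \<ge> 0"
    and opt: "\<And>t. 0<t \<Longrightarrow> t<1 \<Longrightarrow> \<Phi> z \<le> \<Phi> ((1-t) *\<^sub>R z + t *\<^sub>R v)"
    and conv: "\<And>t. 0<t \<Longrightarrow> t<1 \<Longrightarrow> \<Phi> ((1-t) *\<^sub>R z + t *\<^sub>R v)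
                 \<le> (1-t)*\<Phi> z + t*\<Phi> v - m/2*t*(1-t)*(norm (z-v))\<^sup>2"
  shows "\<Phi> z + m/2*(norm (v-z))\<^sup>2 \<le> \<Phi> v"
proof -
  have H: "\<Phi> z \<le> \<Phi> v - (m/2*(norm (z-v))\<^sup>2)*(1-t)" if t: "0<t" "t<1" for t
  proof -
    have e1: "t*(\<Phi> v - (m/2*(norm (z-v))\<^sup>2)*(1-t)) = t*\<Phi> v - m/2*t*(1-t)*(norm (z-v))\<^sup>2"
      by (simp add: algebra_simps)
    have e2: "(1-t)*\<Phi> z = \<Phi> z - t*\<Phi> z" by (simp add: algebra_simps)
    have "t*\<Phi> z \<le> t*(\<Phi> v - (m/2*(norm (z-v))\<^sup>2)*(1-t))"
      using opt[OF t] conv[OF t] e1 e2 by linarith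
    then show ?thesis using t by (meson mult_le_cancel_left_pos)
  qed
  have K: "m/2*(norm (z-v))\<^sup>2 \<ge> 0" using m by simp
  have "\<Phi> z \<le> \<Phi> v - m/2*(norm (z-v))\<^sup>2"
    by (rule lim_aux[OF K H])
  then show ?thesis by (simp add: norm_minus_commute)
qed



lemma conj_not_minf:
  assumes "ext_proper F" shows "conj_fun F u \<noteq> -\<infinity>"
proof -
  obtain w where w: "F w \<noteq> \<infinity>" "F w \<noteq> -\<infinity>" using assms unfolding ext_proper_def by auto
  then obtain r where r: "F w = ereal r" by (cases "F w") auto
  have "ereal (u \<bullet> w) - F w \<le> conj_fun F u" unfolding conj_fun_def by (rule SUP_upper) simp
  then have "ereal (u \<bullet> w - r) \<le> conj_fun F u" using r by simp
  then show ?thesis by force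
qed

lemma sc_real:
  fixes f :: "'a::real_inner \<Rightarrow> ereal"
  assumes sc: "strongly_convex_ext \<mu> f" and nm: "\<And>u. f u \<noteq> -\<infinity>"
    and a: "f u = ereal a" and b: "f v = ereal b" and t: "0<t" "t<1"
  shows "f ((1-t) *\<^sub>R u + t *\<^sub>R v) \<noteq> \<infinity> \<and>
    real_of_ereal (f ((1-t) *\<^sub>R u + t *\<^sub>R v)) \<le> (1-t)*a + t*b - \<mu>/2*t*(1-t)*(norm (u-v))\<^sup>2"
proof -
  let ?w = "(1-t) *\<^sub>R u + t *\<^sub>R v"
  have g: "f ?w - ereal (\<mu>/2*(norm ?w)\<^sup>2) \<le> ereal (1-t) * (f u - ereal (\<mu>/2*(norm u)\<^sup>2))
       + ereal t * (f v - ereal (\<mu>/2*(norm v)\<^sup>2))"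
    using sc t unfolding strongly_convex_ext_def ext_convex_def by blast
  show ?thesis
  proof (cases "f ?w")
    case (real c)
    then have "c - \<mu>/2*(norm ?w)\<^sup>2 \<le> (1-t)*(a - \<mu>/2*(norm u)\<^sup>2) + t*(b - \<mu>/2*(norm v)\<^sup>2)"
      using g a b by simp
    then have "c \<le> (1-t)*a + t*b + \<mu>/2*((norm ?w)\<^sup>2 - (1-t)*(norm u)\<^sup>2 - t*(norm v)\<^sup>2)"
      by (simp add: algebra_simps diff_divide_distrib add_divide_distrib)
    also have "(norm ?w)\<^sup>2 - (1-t)*(norm u)\<^sup>2 - t*(norm v)\<^sup>2 = - (t*(1-t)*(norm (u-v))\<^sup>2)"
      using sq_comb[of t u v] by simp
    finally show ?thesis using real by (simp add: algebra_simps diff_divide_distrib)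
  next
    case PInf
    have e: "ereal (1-t) * (f u - ereal (\<mu>/2*(norm u)\<^sup>2)) + ereal t * (f v - ereal (\<mu>/2*(norm v)\<^sup>2))
      = ereal ((1-t) * (a - \<mu>/2*(norm u)\<^sup>2) + t * (b - \<mu>/2*(norm v)\<^sup>2))" using a b by simp
    from g have False unfolding e PInf by simp
    then show ?thesis ..
  next
    case MInf then show ?thesis using nm by simp
  qed
qed




lemma prox_y:
  fixes f :: "'b::real_inner \<Rightarrow> ereal"
  assumes sc: "strongly_convex_ext \<mu> f" and nm: "\<And>u. f u \<noteq> -\<infinity>" and sg: "\<sigma> > 0" and mu: "\<mu> > 0"
    and opt: "\<And>v. f z - ereal (z \<bullet> c) + ereal (1 / (2 * \<sigma>) * (norm (z - y0))\<^sup>2)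
                 \<le> f v - ereal (v \<bullet> c) + ereal (1 / (2 * \<sigma>) * (norm (v - y0))\<^sup>2)"
    and a: "f z = ereal a" and b: "f v = ereal b"
  shows "a - z \<bullet> c + 1 / (2 * \<sigma>) * (norm (z - y0))\<^sup>2 + (\<mu> + 1/\<sigma>)/2 * (norm (v - z))\<^sup>2
         \<le> b - v \<bullet> c + 1 / (2 * \<sigma>) * (norm (v - y0))\<^sup>2"
proof -
  define \<Phi> where "\<Phi> w = real_of_ereal (f w) - w \<bullet> c + 1 / (2 * \<sigma>) * (norm (w - y0))\<^sup>2" for w
  have m: "\<mu> + 1/\<sigma> \<ge> 0" using sg mu by simp
  have "\<Phi> z + (\<mu> + 1/\<sigma>)/2 * (norm (v - z))\<^sup>2 \<le> \<Phi> v"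
  proof (rule prox_gen[OF m])
    fix t :: real assume t: "0 < t" "t < 1"
    let ?w = "(1-t) *\<^sub>R z + t *\<^sub>R v"
    have S: "f ?w \<noteq> \<infinity>" and S2: "real_of_ereal (f ?w) \<le> (1-t)*a + t*b - \<mu>/2*t*(1-t)*(norm (z-v))\<^sup>2"
      using sc_real[OF sc nm a b t] by auto
    have fw: "f ?w = ereal (real_of_ereal (f ?w))" using S nm[of ?w] by (cases "f ?w") auto
    have "ereal (\<Phi> z) \<le> ereal (\<Phi> ?w)"
      using opt[of ?w] unfolding \<Phi>_def a by (subst (asm) fw) simp
    then show "\<Phi> z \<le> \<Phi> ?w" by simp
    have wc: "?w \<bullet> c = (1-t) * (z \<bullet> c) + t * (v \<bullet> c)" by (simp add: inner_add_left)
    have "?w - y0 = (1-t) *\<^sub>R (z - y0) + t *\<^sub>R (v - y0)" by (simp add: algebra_simps)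
    then have qw0: "(norm (?w - y0))\<^sup>2 = (1-t)*(norm (z-y0))\<^sup>2 + t*(norm (v-y0))\<^sup>2 - t*(1-t)*(norm (z-v))\<^sup>2"
      using sq_comb[of t "z-y0" "v-y0"] by simp
    have qw: "1 / (2 * \<sigma>) * (norm (?w - y0))\<^sup>2 = (1-t)*(1 / (2 * \<sigma>) * (norm (z-y0))\<^sup>2)
        + t*(1 / (2 * \<sigma>) * (norm (v-y0))\<^sup>2) - 1 / (2 * \<sigma>) * (t*(1-t)*(norm (z-v))\<^sup>2)"
      unfolding qw0 by (simp add: algebra_simps diff_divide_distrib add_divide_distrib)
    have e: "(1-t)*\<Phi> z + t*\<Phi> v - (\<mu> + 1/\<sigma>)/2*t*(1-t)*(norm (z-v))\<^sup>2
       = ((1-t)*a + t*b - \<mu>/2*t*(1-t)*(norm (z-v))\<^sup>2) - ((1-t) * (z \<bullet> c) + t * (v \<bullet> c))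
         + ((1-t)*(1 / (2 * \<sigma>) * (norm (z-y0))\<^sup>2)
        + t*(1 / (2 * \<sigma>) * (norm (v-y0))\<^sup>2) - 1 / (2 * \<sigma>) * (t*(1-t)*(norm (z-v))\<^sup>2))"
      unfolding \<Phi>_def a b by (simp add: algebra_simps add_divide_distrib diff_divide_distrib)
    show "\<Phi> ?w \<le> (1-t)*\<Phi> z + t*\<Phi> v - (\<mu> + 1/\<sigma>)/2*t*(1-t)*(norm (z-v))\<^sup>2"
      unfolding e using S2 wc qw unfolding \<Phi>_def by linarith
  qed
  then show ?thesis unfolding \<Phi>_def a b by simp
qed

lemma prox_x:
  fixes R :: "'a::real_inner \<Rightarrow> real" and A :: "'a \<Rightarrow> 'b::real_inner"
  assumes linA: "linear A" and wc: "weakly_convex \<rho> R" and tau: "\<tau> > 0" and step2: "\<tau> * \<rho> < 1"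
    and opt: "\<And>u. R z + yk \<bullet> A z + 1 / (2 * \<tau>) * (norm (z - x0))\<^sup>2
                 \<le> R u + yk \<bullet> A u + 1 / (2 * \<tau>) * (norm (u - x0))\<^sup>2"
  shows "R z + yk \<bullet> A z + 1 / (2 * \<tau>) * (norm (z - x0))\<^sup>2 + (1/\<tau> - \<rho>)/2 * (norm (v - z))\<^sup>2
         \<le> R v + yk \<bullet> A v + 1 / (2 * \<tau>) * (norm (v - x0))\<^sup>2"
proof -
  define \<Phi> where "\<Phi> w = R w + yk \<bullet> A w + 1 / (2 * \<tau>) * (norm (w - x0))\<^sup>2" for w
  have "\<rho> < 1/\<tau>" using step2 tau by (simp add: field_simps mult.commute)
  then have m: "1/\<tau> - \<rho> \<ge> 0" by simp
  have "\<Phi> z + (1/\<tau> - \<rho>)/2 * (norm (v - z))\<^sup>2 \<le> \<Phi> v"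
  proof (rule prox_gen[OF m])
    fix t :: real assume t: "0 < t" "t < 1"
    let ?w = "(1-t) *\<^sub>R z + t *\<^sub>R v"
    show "\<Phi> z \<le> \<Phi> ?w" using opt[of ?w] unfolding \<Phi>_def .
    have cv: "R ?w + \<rho>/2*(norm ?w)\<^sup>2 \<le> (1-t)*(R z + \<rho>/2*(norm z)\<^sup>2) + t*(R v + \<rho>/2*(norm v)\<^sup>2)"
      using convex_onD[OF wc[unfolded weakly_convex_def], of t z v] t by simp
    have "R ?w \<le> (1-t)*R z + t*R v + \<rho>/2*((1-t)*(norm z)\<^sup>2 + t*(norm v)\<^sup>2 - (norm ?w)\<^sup>2)"
      using cv by (simp add: algebra_simps diff_divide_distrib add_divide_distrib)
    also have "(1-t)*(norm z)\<^sup>2 + t*(norm v)\<^sup>2 - (norm ?w)\<^sup>2 = t*(1-t)*(norm (z-v))\<^sup>2"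
      using sq_comb[of t z v] by simp
    finally have Rw: "R ?w \<le> (1-t)*R z + t*R v + \<rho>/2*(t*(1-t)*(norm (z-v))\<^sup>2)" .
    have Aw: "yk \<bullet> A ?w = (1-t) * (yk \<bullet> A z) + t * (yk \<bullet> A v)"
      by (simp add: linear_add[OF linA] linear_scale[OF linA] inner_add_right)
    have "?w - x0 = (1-t) *\<^sub>R (z - x0) + t *\<^sub>R (v - x0)" by (simp add: algebra_simps)
    then have qw0: "(norm (?w - x0))\<^sup>2 = (1-t)*(norm (z-x0))\<^sup>2 + t*(norm (v-x0))\<^sup>2 - t*(1-t)*(norm (z-v))\<^sup>2"
      using sq_comb[of t "z-x0" "v-x0"] by simp
    have qw: "1 / (2 * \<tau>) * (norm (?w - x0))\<^sup>2 = (1-t)*(1 / (2 * \<tau>) * (norm (z-x0))\<^sup>2)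
        + t*(1 / (2 * \<tau>) * (norm (v-x0))\<^sup>2) - 1 / (2 * \<tau>) * (t*(1-t)*(norm (z-v))\<^sup>2)"
      unfolding qw0 by (simp add: algebra_simps diff_divide_distrib add_divide_distrib)
    have e: "(1-t)*\<Phi> z + t*\<Phi> v - (1/\<tau> - \<rho>)/2*t*(1-t)*(norm (z-v))\<^sup>2
       = ((1-t)*R z + t*R v + \<rho>/2*(t*(1-t)*(norm (z-v))\<^sup>2)) + ((1-t) * (yk \<bullet> A z) + t * (yk \<bullet> A v))
         + ((1-t)*(1 / (2 * \<tau>) * (norm (z-x0))\<^sup>2)
        + t*(1 / (2 * \<tau>) * (norm (v-x0))\<^sup>2) - 1 / (2 * \<tau>) * (t*(1-t)*(norm (z-v))\<^sup>2))"
      unfolding \<Phi>_def by (simp add: algebra_simps add_divide_distrib diff_divide_distrib)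
    show "\<Phi> ?w \<le> (1-t)*\<Phi> z + t*\<Phi> v - (1/\<tau> - \<rho>)/2*t*(1-t)*(norm (z-v))\<^sup>2"
      unfolding e using Rw Aw qw unfolding \<Phi>_def by linarith
  qed
  then show ?thesis unfolding \<Phi>_def by simp
qed




lemma young:
  fixes A :: "'a::euclidean_space \<Rightarrow> 'b::euclidean_space"
  assumes linA: "linear A" and tau: "\<tau> > 0" and sg: "\<sigma> > 0" and st: "\<tau> * \<sigma> * (onorm A)\<^sup>2 < 1"
  shows "\<bar>A p \<bullet> w\<bar> \<le> (norm p)\<^sup>2/(2*\<tau>) + (norm w)\<^sup>2/(2*\<sigma>)"
proof -
  have bl: "bounded_linear A" using linA linear_conv_bounded_linear by blast
  define n where "n = onorm A"
  define P where "P = norm p"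
  define W where "W = norm w"
  have n0: "n \<ge> 0" unfolding n_def using onorm_pos_le[OF bl] .
  have P0: "P \<ge> 0" "W \<ge> 0" unfolding P_def W_def by auto
  have "\<bar>A p \<bullet> w\<bar> \<le> norm (A p) * W" unfolding W_def by (rule Cauchy_Schwarz_ineq2)
  also have "\<dots> \<le> n * P * W" unfolding n_def P_def using onorm[OF bl, of p] P0
    by (simp add: mult_right_mono)
  also have "n * P * W \<le> P\<^sup>2/(2*\<tau>) + W\<^sup>2/(2*\<sigma>)"
  proof -
    have "0 \<le> (P - \<tau>*n*W)\<^sup>2" by simp
    then have "2*\<tau>*(n*P*W) \<le> P\<^sup>2 + \<tau>*(\<tau>*n\<^sup>2*W\<^sup>2)" by (simp add: power2_eq_square algebra_simps)
    also have "\<tau>*n\<^sup>2*W\<^sup>2 \<le> W\<^sup>2/\<sigma>"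
    proof -
      have "\<tau>*n\<^sup>2 \<le> 1/\<sigma>" using st sg unfolding n_def by (simp add: field_simps mult.commute mult.left_commute)
      then show ?thesis using mult_right_mono[of "\<tau>*n\<^sup>2" "1/\<sigma>" "W\<^sup>2"] by simp
    qed
    finally have "2*\<tau>*(n*P*W) \<le> P\<^sup>2 + \<tau>*(W\<^sup>2/\<sigma>)" using tau by simp
    then have "n*P*W \<le> (P\<^sup>2 + \<tau>*(W\<^sup>2/\<sigma>))/(2*\<tau>)" using tau by (simp add: field_simps)
    also have "\<dots> = P\<^sup>2/(2*\<tau>) + W\<^sup>2/(2*\<sigma>)" using tau by (simp add: field_simps)
    finally show ?thesis .
  qed
  finally show ?thesis unfolding P_def W_def .
qed




lemma final_ineq:
  fixes A :: "'a::euclidean_space \<Rightarrow> 'b::euclidean_space"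
  assumes linA: "linear A" and tau: "\<tau> > 0" and sg: "\<sigma> > 0"
    and X: "R1 + Y0 \<bullet> A (X0 + q) + 1 / (2 * \<tau>) * (norm q)\<^sup>2 + (1/\<tau> - \<rho>)/2 * (norm q)\<^sup>2
            \<le> R0 + Y0 \<bullet> A X0"
    and Y: "a - Y0 \<bullet> A (X0 + p) + 1 / (2 * \<sigma>) * (norm u)\<^sup>2 + (\<mu> + 1/\<sigma>)/2 * (norm w)\<^sup>2
            \<le> b - (Y0 + w) \<bullet> A (X0 + p) + 1 / (2 * \<sigma>) * (norm (u + w))\<^sup>2"
    and Yg: "\<bar>A p \<bullet> (u - w)\<bar> \<le> (norm p)\<^sup>2/(2*\<tau>) + (norm (u - w))\<^sup>2/(2*\<sigma>)"
  shows "(R0 + A X0 \<bullet> Y0 - a + 1/2 * Mnorm_sq \<tau> \<sigma> A (-p) (-u))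
         - (R1 + A (X0 + q) \<bullet> (Y0 + w) - b + 1/2 * Mnorm_sq \<tau> \<sigma> A (-q) (-w))
         \<ge> 1/2 * (\<mu> * \<sigma> - 3) * ((norm w)\<^sup>2 / \<sigma>) + 1/2 * (1 - \<rho> * \<tau>) * ((norm q)\<^sup>2 / \<tau>)"
proof -
  have e1: "1/2 * (\<mu> * \<sigma> - 3) * ((norm w)\<^sup>2 / \<sigma>) = \<mu>/2 * (norm w)\<^sup>2 - 3/2 * (1/\<sigma>) * (norm w)\<^sup>2"
    using sg by (simp add: field_simps)
  have e2: "1/2 * (1 - \<rho> * \<tau>) * ((norm q)\<^sup>2 / \<tau>) = 1/2 * (1/\<tau>) * (norm q)\<^sup>2 - \<rho>/2 * (norm q)\<^sup>2"
    using tau by (simp add: field_simps)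
  have Yg': "A p \<bullet> u - A p \<bullet> w \<le> (norm p)\<^sup>2/(2*\<tau>) + (norm (u - w))\<^sup>2/(2*\<sigma>)"
    using Yg by (simp add: inner_diff_right)
  have nuw: "(norm (u + w))\<^sup>2 = (norm u)\<^sup>2 + 2 * (u \<bullet> w) + (norm w)\<^sup>2"
    by (simp add: power2_norm_eq_inner inner_add_left inner_add_right inner_commute)
  have nuw2: "(norm (u - w))\<^sup>2 = (norm u)\<^sup>2 - 2 * (u \<bullet> w) + (norm w)\<^sup>2"
    by (simp add: power2_norm_eq_inner inner_diff_left inner_diff_right inner_commute)
  have M1: "Mnorm_sq \<tau> \<sigma> A (-p) (-u) = (1/\<tau>) * (norm p)\<^sup>2 - 2 * (A p \<bullet> u) + (1/\<sigma>) * (norm u)\<^sup>2"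
    unfolding Mnorm_sq_def by (simp add: linear_neg[OF linA])
  have M2: "Mnorm_sq \<tau> \<sigma> A (-q) (-w) = (1/\<tau>) * (norm q)\<^sup>2 - 2 * (A q \<bullet> w) + (1/\<sigma>) * (norm w)\<^sup>2"
    unfolding Mnorm_sq_def by (simp add: linear_neg[OF linA])
  have L1: "A (X0 + q) = A X0 + A q" "A (X0 + p) = A X0 + A p" by (simp_all add: linear_add[OF linA])
  note defs = L1 inner_add_left inner_add_right
  have X': "R1 + (Y0 \<bullet> A X0 + Y0 \<bullet> A q) + 1 / (2 * \<tau>) * (norm q)\<^sup>2 + (1/\<tau> - \<rho>)/2 * (norm q)\<^sup>2
            \<le> R0 + Y0 \<bullet> A X0" using X unfolding defs .
  have Y': "a - (Y0 \<bullet> A X0 + Y0 \<bullet> A p) + 1 / (2 * \<sigma>) * (norm u)\<^sup>2 + (\<mu> + 1/\<sigma>)/2 * (norm w)\<^sup>2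
            \<le> b - (Y0 \<bullet> A X0 + w \<bullet> A X0 + (Y0 \<bullet> A p + w \<bullet> A p)) + 1 / (2 * \<sigma>) * ((norm u)\<^sup>2 + 2 * (u \<bullet> w) + (norm w)\<^sup>2)"
    using Y unfolding defs nuw .
  have nn: "(norm w)\<^sup>2/(\<sigma>*2) \<le> (norm w)\<^sup>2/\<sigma>" using sg by (intro divide_left_mono) auto
  show ?thesis
    unfolding e1 e2 M1 M2 defs
    using X' Y' Yg'[unfolded nuw2] nn
    by (simp add: algebra_simps inner_commute add_divide_distrib diff_divide_distrib)
qed


theorem mainTheorem5:
  fixes A :: "'a::euclidean_space \<Rightarrow> 'b::euclidean_space"
    and R :: "'a \<Rightarrow> real"
    and F :: "'b \<Rightarrow> ereal"
    and x :: "nat \<Rightarrow> 'a" and y :: "nat \<Rightarrow> 'b"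
    and \<rho> \<mu> \<tau> \<sigma> :: real
  assumes linA: "linear A"
    and rho: "\<rho> \<ge> 0" and wc: "weakly_convex \<rho> R"
    and Fprop: "ext_proper F" and Fconv: "ext_convex F" and Flsc: "ext_lsc F"
    and mu: "\<mu> > 0" and sc: "strongly_convex_ext \<mu> (conj_fun F)"
    and tau: "\<tau> > 0" and sigma: "\<sigma> > 0"
    and step1: "\<tau> * \<sigma> * (onorm A)\<^sup>2 < 1"
    and step2: "\<tau> * \<rho> < 1"
    and step3: "\<mu> * \<sigma> > 3"
    and xupd: "\<And>k u. R (x (Suc k)) + y k \<bullet> A (x (Suc k)) + 1 / (2 * \<tau>) * (norm (x (Suc k) - x k))\<^sup>2
                 \<le> R u + y k \<bullet> A u + 1 / (2 * \<tau>) * (norm (u - x k))\<^sup>2"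
    and yupd: "\<And>k v. conj_fun F (y (Suc k))
                   - ereal (y (Suc k) \<bullet> A (2 *\<^sub>R x (Suc k) - x k))
                   + ereal (1 / (2 * \<sigma>) * (norm (y (Suc k) - y k))\<^sup>2)
                 \<le> conj_fun F v - ereal (v \<bullet> A (2 *\<^sub>R x (Suc k) - x k))
                   + ereal (1 / (2 * \<sigma>) * (norm (v - y k))\<^sup>2)"
    and k: "k \<ge> 1"
  shows "lyap R A F \<tau> \<sigma> (x k) (y k) (x (k - 1)) (y (k - 1))
           - lyap R A F \<tau> \<sigma> (x (Suc k)) (y (Suc k)) (x k) (y k)
         \<ge> ereal (1/2 * (\<mu> * \<sigma> - 3) * ((norm (y k - y (Suc k)))\<^sup>2 / \<sigma>)
                 + 1/2 * (1 - \<rho> * \<tau>) * ((norm (x k - x (Suc k)))\<^sup>2 / \<tau>))"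
proof -
  obtain K where kK: "k = Suc K" using k by (cases k) auto
  have km: "k - 1 = K" using kK by simp
  have nm: "\<And>u. conj_fun F u \<noteq> -\<infinity>" using conj_not_minf[OF Fprop] .
  show ?thesis
  proof (cases "conj_fun F (y (Suc k))")
    case PInf
    have "lyap R A F \<tau> \<sigma> (x (Suc k)) (y (Suc k)) (x k) (y k) = -\<infinity>"
      by (simp add: lyap_def saddleL_def PInf)
    then show ?thesis by simp
  next
    case MInf then show ?thesis using nm by simp
  next
    case (real b)
    note fb = real
    have yopt: "\<And>v. conj_fun F (y k) - ereal (y k \<bullet> A (2 *\<^sub>R x k - x K))
                   + ereal (1 / (2 * \<sigma>) * (norm (y k - y K))\<^sup>2)
                 \<le> conj_fun F v - ereal (v \<bullet> A (2 *\<^sub>R x k - x K))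
                   + ereal (1 / (2 * \<sigma>) * (norm (v - y K))\<^sup>2)"
      using yupd[of K] unfolding kK[symmetric] .
    obtain a where fk: "conj_fun F (y k) = ereal a"
    proof (cases "conj_fun F (y k)")
      case (real r) then show ?thesis using that by blast
    next
      case PInf
      have "conj_fun F (y k) - ereal (y k \<bullet> A (2 *\<^sub>R x k - x K))
                   + ereal (1 / (2 * \<sigma>) * (norm (y k - y K))\<^sup>2) = \<infinity>" using PInf by simp
      moreover have "conj_fun F (y (Suc k)) - ereal (y (Suc k) \<bullet> A (2 *\<^sub>R x k - x K))
                   + ereal (1 / (2 * \<sigma>) * (norm (y (Suc k) - y K))\<^sup>2) \<noteq> \<infinity>" using fb by simp
      ultimately show ?thesis using yopt[of "y (Suc k)"] by simp
    next
      case MInf then show ?thesis using nm by simp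
    qed
    have X0: "R (x (Suc k)) + y k \<bullet> A (x (Suc k)) + 1 / (2 * \<tau>) * (norm (x (Suc k) - x k))\<^sup>2
         + (1/\<tau> - \<rho>)/2 * (norm (x k - x (Suc k)))\<^sup>2
         \<le> R (x k) + y k \<bullet> A (x k) + 1 / (2 * \<tau>) * (norm (x k - x k))\<^sup>2"
      by (rule prox_x[OF linA wc tau step2 xupd])
    have Y0: "a - y k \<bullet> A (2 *\<^sub>R x k - x K) + 1 / (2 * \<sigma>) * (norm (y k - y K))\<^sup>2
         + (\<mu> + 1/\<sigma>)/2 * (norm (y (Suc k) - y k))\<^sup>2
         \<le> b - y (Suc k) \<bullet> A (2 *\<^sub>R x k - x K) + 1 / (2 * \<sigma>) * (norm (y (Suc k) - y K))\<^sup>2"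
      by (rule prox_y[OF sc nm sigma mu yopt fk fb])
    have xe: "2 *\<^sub>R x k - x K = x k + (x k - x K)" by (simp add: scaleR_2)
    have X: "R (x (Suc k)) + y k \<bullet> A (x k + (x (Suc k) - x k)) + 1 / (2 * \<tau>) * (norm (x (Suc k) - x k))\<^sup>2
         + (1/\<tau> - \<rho>)/2 * (norm (x (Suc k) - x k))\<^sup>2 \<le> R (x k) + y k \<bullet> A (x k)"
      using X0 by (simp add: norm_minus_commute)
    have Y: "a - y k \<bullet> A (x k + (x k - x K)) + 1 / (2 * \<sigma>) * (norm (y k - y K))\<^sup>2
         + (\<mu> + 1/\<sigma>)/2 * (norm (y (Suc k) - y k))\<^sup>2
         \<le> b - (y k + (y (Suc k) - y k)) \<bullet> A (x k + (x k - x K))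
           + 1 / (2 * \<sigma>) * (norm ((y k - y K) + (y (Suc k) - y k)))\<^sup>2"
      using Y0 unfolding xe by simp
    have Yg: "\<bar>A (x k - x K) \<bullet> ((y k - y K) - (y (Suc k) - y k))\<bar>
        \<le> (norm (x k - x K))\<^sup>2/(2*\<tau>) + (norm ((y k - y K) - (y (Suc k) - y k)))\<^sup>2/(2*\<sigma>)"
      by (rule young[OF linA tau sigma step1])
    have F: "(R (x k) + A (x k) \<bullet> y k - a + 1/2 * Mnorm_sq \<tau> \<sigma> A (- (x k - x K)) (- (y k - y K)))
         - (R (x (Suc k)) + A (x k + (x (Suc k) - x k)) \<bullet> (y k + (y (Suc k) - y k)) - b
            + 1/2 * Mnorm_sq \<tau> \<sigma> A (- (x (Suc k) - x k)) (- (y (Suc k) - y k)))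
         \<ge> 1/2 * (\<mu> * \<sigma> - 3) * ((norm (y (Suc k) - y k))\<^sup>2 / \<sigma>)
           + 1/2 * (1 - \<rho> * \<tau>) * ((norm (x (Suc k) - x k))\<^sup>2 / \<tau>)"
      by (rule final_ineq[OF linA tau sigma X Y Yg])
    have L1: "lyap R A F \<tau> \<sigma> (x k) (y k) (x (k - 1)) (y (k - 1))
       = ereal (R (x k) + A (x k) \<bullet> y k - a + 1/2 * Mnorm_sq \<tau> \<sigma> A (- (x k - x K)) (- (y k - y K)))"
      unfolding km by (simp add: lyap_def saddleL_def fk)
    have L2: "lyap R A F \<tau> \<sigma> (x (Suc k)) (y (Suc k)) (x k) (y k)
       = ereal (R (x (Suc k)) + A (x k + (x (Suc k) - x k)) \<bullet> (y k + (y (Suc k) - y k)) - b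
            + 1/2 * Mnorm_sq \<tau> \<sigma> A (- (x (Suc k) - x k)) (- (y (Suc k) - y k)))"
      by (simp add: lyap_def saddleL_def fb)
    show ?thesis unfolding L1 L2 using F by (simp add: norm_minus_commute)
  qed
qed

end
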